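(* Let $r\ge 2$ be an even integer. For every nonnegative integer $n$, the number of overpartitions of $n$ in which every non-overlined part is odd and greater than $r$ (overlined parts being unrestricted apart from being distinct) equals the number of partitions of $n$ into odd parts in which parts greater than $r$ may come in two colors (parts at most $r$ have a single color).
   Context: A partition of $n$ is a finite non-increasing sequence of positive integers (parts) summing to $n$ (the empty partition is the unique partition of $0$). In partitions with two colors, two partitions are the same if they have the same multiset of (part, color) pairs; e.g. for $r=2$, $n=6$ the relevant partitions are $5_11,5_21,3_13_1,3_13_2,3_23_2,3_11^3,3_21^3,1^6$. An overpartition of $n$ is a partition of $n$ in which the first occurrence of each part size may be overlined; equivalently, a pair $(\lambda,\mu)$ with $\lambda$ a partition into distinct parts (the overlined parts), $\mu$ an arbitrary partition (the non-overlined parts), and $|\lambda|+|\mu|=n$. *)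

theory Defs
  imports Main "HOL-Library.Multiset"
begin

definition partitions :: "nat \<Rightarrow> nat multiset set" where
  "partitions n = {M. (\<forall>x\<in>#M. 0 < x) \<and> sum_mset M = n}"

definition coloured_partitions :: "nat \<Rightarrow> (nat \<times> nat) multiset set" where
  "coloured_partitions n = {P. (\<forall>p\<in>#P. 0 < fst p) \<and> sum_mset (image_mset fst P) = n}"

text \<open>An overpartition of n as a pair (L, M): L the finite set of (distinct)
  overlined parts, M the partition formed by the non-overlined parts.\<close>
definition overpartitions :: "nat \<Rightarrow> (nat set \<times> nat multiset) set" where
  "overpartitions n = {(L, M). finite L \<and> (\<forall>x\<in>L. 0 < x) \<and> (\<forall>x\<in>#M. 0 < x)
                          \<and> \<Sum>L + sum_mset M = n}"

end

theory Submission
  imports Defs "HOL-Library.Nat_Bijection"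
begin

function v2 :: "nat \<Rightarrow> nat" where
  "v2 x = (if x \<noteq> 0 \<and> even x then Suc (v2 (x div 2)) else 0)"
  by auto
termination by (relation "measure id") auto

function oddp :: "nat \<Rightarrow> nat" where
  "oddp x = (if x \<noteq> 0 \<and> even x then oddp (x div 2) else x)"
  by auto
termination by (relation "measure id") auto

declare v2.simps[simp del] oddp.simps[simp del]

lemma decomp: "2 ^ v2 x * oddp x = x"
proof (induction x rule: less_induct)
  case (less x)
  show ?case
  proof (cases "x \<noteq> 0 \<and> even x")
    case True
    then have "2 ^ v2 (x div 2) * oddp (x div 2) = x div 2" using less by simp
    then show ?thesis using True by (subst v2.simps, subst oddp.simps) auto
  next
    case False
    then show ?thesis by (subst v2.simps, subst oddp.simps) auto
  qed
qed

lemma odd_oddp: "x > 0 \<Longrightarrow> odd (oddp x)"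
proof (induction x rule: less_induct)
  case (less x)
  show ?case
  proof (cases "even x")
    case True
    then show ?thesis using less by (subst oddp.simps) auto
  next
    case False
    then show ?thesis by (subst oddp.simps) auto
  qed
qed

lemma v2_oddp_pow: "odd m \<Longrightarrow> v2 (2^a * m) = a \<and> oddp (2^a * m) = m"
proof (induction a)
  case 0
  then show ?case by (subst v2.simps, subst oddp.simps) auto
next
  case (Suc a)
  have "m > 0" using Suc.prems by (rule odd_pos)
  moreover have "2 ^ Suc a * m \<noteq> 0" "even (2 ^ Suc a * m)" "2 ^ Suc a * m div 2 = 2^a * m" using Suc calculation by auto
  ultimately show ?case using Suc by (subst v2.simps, subst oddp.simps) simp
qed

lemma same_parts: "x > 0 \<Longrightarrow> y > 0 \<Longrightarrow> v2 x = v2 y \<Longrightarrow> oddp x = oddp y \<Longrightarrow> x = y"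
  by (metis decomp)

definition G :: "nat set \<Rightarrow> nat multiset" where
  "G L = (\<Sum>x\<in>L. replicate_mset (2 ^ v2 x) (oddp x))"

definition H :: "nat multiset \<Rightarrow> nat set" where
  "H A = {x. x > 0 \<and> v2 x \<in> set_decode (count A (oddp x))}"

lemma count_G:
  assumes "finite L" "\<forall>x\<in>L. x > 0"
  shows "count (G L) m = set_encode (v2 ` {x\<in>L. oddp x = m})"
proof -
  have inj: "inj_on v2 {x\<in>L. oddp x = m}"
    using assms(2) same_parts by (auto simp: inj_on_def)
  have "count (G L) m = (\<Sum>x\<in>L. if oddp x = m then 2 ^ v2 x else 0)"
    unfolding G_def by (auto simp: count_sum intro!: sum.cong)
  also have "\<dots> = (\<Sum>x\<in>{x\<in>L. oddp x = m}. 2 ^ v2 x)"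
    using assms(1) by (simp add: sum.inter_filter)
  also have "\<dots> = set_encode (v2 ` {x\<in>L. oddp x = m})"
    unfolding set_encode_def using inj by (simp add: sum.reindex)
  finally show ?thesis .
qed

lemma set_G: "\<forall>x\<in>L. x > 0 \<Longrightarrow> y \<in># G L \<Longrightarrow> odd y"
proof -
  assume "\<forall>x\<in>L. x > 0" "y \<in># G L"
  then have "count (G L) y > 0" by simp
  then have "finite L" unfolding G_def by (metis count_empty less_irrefl sum.infinite)
  then show ?thesis using \<open>\<forall>x\<in>L. x > 0\<close> \<open>y \<in># G L\<close> unfolding G_def
    by (induction L rule: finite_induct) (auto split: if_splits simp: odd_oddp)
qed

lemma sum_G: "finite L \<Longrightarrow> sum_mset (G L) = \<Sum>L"
  unfolding G_def
  by (induction L rule: finite_induct) (auto simp: decomp)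

lemma H_pos: "x \<in> H A \<Longrightarrow> x > 0" unfolding H_def by auto

lemma finite_H: "finite (H A)"
proof -
  have "H A \<subseteq> (\<lambda>(m,a). 2^a * m) ` (SIGMA m:set_mset A. set_decode (count A m))"
  proof
    fix x assume x: "x \<in> H A"
    then have "v2 x \<in> set_decode (count A (oddp x))" unfolding H_def by auto
    moreover then have "oddp x \<in># A" by (metis count_inI set_decode_zero empty_iff)
    ultimately show "x \<in> (\<lambda>(m,a). 2^a * m) ` (SIGMA m:set_mset A. set_decode (count A m))"
      using decomp[of x] by (auto intro!: image_eqI[where x="(oddp x, v2 x)"])
  qed
  then show ?thesis by (rule finite_subset) auto
qed

lemma GH: assumes "\<forall>y\<in>#A. odd y" shows "G (H A) = A"
proof (rule multiset_eqI)
  fix m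
  have c: "count (G (H A)) m = set_encode (v2 ` {x\<in>H A. oddp x = m})"
    using finite_H H_pos by (intro count_G) auto
  show "count (G (H A)) m = count A m"
  proof (cases "odd m")
    case True
    have "v2 ` {x\<in>H A. oddp x = m} = set_decode (count A m)"
    proof
      show "v2 ` {x\<in>H A. oddp x = m} \<subseteq> set_decode (count A m)"
        unfolding H_def by auto
      show "set_decode (count A m) \<subseteq> v2 ` {x\<in>H A. oddp x = m}"
      proof
        fix a assume a: "a \<in> set_decode (count A m)"
        have "2^a * m > 0" using True odd_pos by auto
        then show "a \<in> v2 ` {x\<in>H A. oddp x = m}"
          using a v2_oddp_pow[OF True, of a] unfolding H_def
          by (intro image_eqI[where x="2^a*m"]) auto
      qed
    qed
    then show ?thesis using c by simp
  next
    case False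
    have "{x\<in>H A. oddp x = m} = {}" using False H_pos odd_oddp by blast
    moreover have "count A m = 0" using False assms by (meson count_inI)
    ultimately show ?thesis using c by (metis image_empty set_encode_empty)
  qed
qed

lemma HG: assumes "finite L" "\<forall>x\<in>L. x > 0" shows "H (G L) = L"
proof -
  have "x \<in> H (G L) \<longleftrightarrow> x \<in> L" for x
  proof -
    have fin: "finite (v2 ` {y\<in>L. oddp y = oddp x})" using assms by auto
    have "x \<in> H (G L) \<longleftrightarrow> x > 0 \<and> v2 x \<in> v2 ` {y\<in>L. oddp y = oddp x}"
      unfolding H_def using count_G[OF assms] fin by simp
    also have "\<dots> \<longleftrightarrow> x \<in> L"
      using assms(2) same_parts by auto (metis)
    finally show ?thesis .
  qed
  then show ?thesis by auto
qed


definition fm :: "nat set \<times> nat multiset \<Rightarrow> (nat \<times> nat) multiset" where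
  "fm = (\<lambda>(L, M). image_mset (\<lambda>x. (x, 1::nat)) (G L) + image_mset (\<lambda>x. (x, 2::nat)) M)"

definition gm :: "(nat \<times> nat) multiset \<Rightarrow> nat set \<times> nat multiset" where
  "gm P = (H (image_mset fst (filter_mset (\<lambda>p. snd p = 1) P)),
           image_mset fst (filter_mset (\<lambda>p. snd p = 2) P))"

lemma t1: "filter_mset (\<lambda>p. snd p = 1) (fm (L, M)) = image_mset (\<lambda>x. (x, 1::nat)) (G L)"
    unfolding fm_def by (simp add: filter_mset_image_mset)
lemma t2: "filter_mset (\<lambda>p. snd p = 2) (fm (L, M)) = image_mset (\<lambda>x. (x, 2::nat)) M"
    unfolding fm_def by (simp add: filter_mset_image_mset)
lemma t3: "image_mset fst (image_mset (\<lambda>x. (x, 2::nat)) M) = M"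
  by (simp add: multiset.map_comp comp_def)
lemma t4: "image_mset fst (image_mset (\<lambda>x. (x, 1::nat)) M) = M"
  by (simp add: multiset.map_comp comp_def)

lemma part1:
  assumes "finite L" "\<forall>x\<in>L. x > 0"
  shows "gm (fm (L, M)) = (L, M)"
  unfolding gm_def t1 t2 t3 t4 HG[OF assms] ..

lemma pos_of_odd: "\<forall>x\<in>#X. odd (x::nat) \<and> P x \<Longrightarrow> \<forall>x\<in>#X. 0 < x"
proof
  fix x assume "\<forall>x\<in>#X. odd (x::nat) \<and> P x" "x \<in># X"
  then have "odd x" by simp
  then show "0 < x" by (rule odd_pos)
qed

lemma fm_elem:
  assumes "\<forall>y\<in>#G L. odd y" "\<forall>x\<in>#M. odd x \<and> x > r"
    "p \<in># fm (L, M)"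
  shows "0 < fst p \<and> odd (fst p) \<and> (snd p = 1 \<or> (snd p = 2 \<and> fst p > r))"
proof -
  have "set_mset (fm (L, M)) = (\<lambda>x. (x, 1::nat)) ` set_mset (G L) \<union> (\<lambda>x. (x, 2::nat)) ` set_mset M"
    unfolding fm_def prod.case by simp
  with assms(3) consider (a) x where "x \<in># G L" "p = (x, 1)" | (b) x where "x \<in># M" "p = (x, 2)"
    by blast
  then have "odd (fst p) \<and> (snd p = 1 \<or> (snd p = 2 \<and> fst p > r))"
  proof cases
    case a then show ?thesis using assms(1) by simp
  next
    case b then show ?thesis using assms(2) by simp
  qed
  moreover then have "0 < fst p" using odd_pos by blast
  ultimately show ?thesis by blast
qed

lemma part3:
  assumes L: "finite L" "\<forall>x\<in>L. x > 0" and M: "\<forall>x\<in>#M. odd x \<and> x > r"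
  shows "sum_mset (image_mset fst (fm (L, M))) = \<Sum>L + sum_mset M"
    and "\<forall>p\<in>#fm (L, M). 0 < fst p \<and> odd (fst p) \<and> (snd p = 1 \<or> (snd p = 2 \<and> fst p > r))"
proof -
  have Godd: "\<forall>y\<in>#G L. odd y" using set_G[OF L(2)] by blast
  have "image_mset fst (fm (L, M)) = G L + M"
    unfolding fm_def prod.case image_mset_union t3 t4 ..
  then show "sum_mset (image_mset fst (fm (L, M))) = \<Sum>L + sum_mset M"
    using sum_G[OF L(1)] by simp
  show "\<forall>p\<in>#fm (L, M). 0 < fst p \<and> odd (fst p) \<and> (snd p = 1 \<or> (snd p = 2 \<and> fst p > r))"
    using fm_elem[OF Godd M] by blast
qed

lemma split12:
  assumes "\<forall>p\<in>#P. snd p = (1::nat) \<or> snd p = 2"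
  shows "filter_mset (\<lambda>p. \<not> snd p = 1) P = filter_mset (\<lambda>p. snd p = 2) P"
proof (rule filter_mset_cong)
  fix p assume "p \<in># P"
  then have "snd p = 1 \<or> snd p = 2" using assms by blast
  then show "(\<not> snd p = 1) = (snd p = 2)" by auto
qed simp

lemma part2:
  assumes "\<forall>p\<in>#P. odd (fst p)" "\<forall>p\<in>#P. snd p = (1::nat) \<or> snd p = 2"
  shows "fm (gm P) = P"
proof -
  define A where "A = image_mset fst (filter_mset (\<lambda>p. snd p = 1) P)"
  have Aodd: "\<forall>y\<in>#A. odd y" using assms(1) unfolding A_def by auto
  have e1: "image_mset (\<lambda>x. (x, 1::nat)) A = filter_mset (\<lambda>p. snd p = 1) P"
    unfolding A_def by (induction P) auto
  have e2: "image_mset (\<lambda>x. (x, 2::nat)) (image_mset fst (filter_mset (\<lambda>p. snd p = 2) P))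
       = filter_mset (\<lambda>p. snd p = 2) P"
    by (induction P) auto
  have e3: "filter_mset (\<lambda>p. \<not> snd p = 1) P = filter_mset (\<lambda>p. snd p = 2) P"
    using assms(2) by (rule split12)
  have "fm (gm P) = image_mset (\<lambda>x. (x, 1::nat)) (G (H A)) + image_mset (\<lambda>x. (x, 2::nat)) (image_mset fst (filter_mset (\<lambda>p. snd p = 2) P))"
    unfolding fm_def gm_def A_def by simp
  also have "\<dots> = filter_mset (\<lambda>p. snd p = 1) P + filter_mset (\<lambda>p. \<not> snd p = 1) P"
    unfolding GH[OF Aodd] e1 e2 e3 ..
  also have "\<dots> = P" by (rule multiset_partition[symmetric])
  finally show ?thesis .
qed

lemma part4:
  assumes "\<forall>p\<in>#P. odd (fst p)" "\<forall>p\<in>#P. snd p = (1::nat) \<or> snd p = 2"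
  shows "finite (fst (gm P))" "\<forall>x\<in>fst (gm P). x > 0"
    "\<Sum>(fst (gm P)) + sum_mset (snd (gm P)) = sum_mset (image_mset fst P)"
    "\<And>x. x \<in># snd (gm P) \<Longrightarrow> \<exists>p. p \<in># P \<and> snd p = 2 \<and> x = fst p"
proof -
  define A where "A = image_mset fst (filter_mset (\<lambda>p. snd p = 1) P)"
  define M where "M = image_mset fst (filter_mset (\<lambda>p. snd p = 2) P)"
  have g: "gm P = (H A, M)" unfolding gm_def A_def M_def by simp
  have Aodd: "\<forall>y\<in>#A. odd y" using assms(1) unfolding A_def by auto
  have e3: "filter_mset (\<lambda>p. \<not> snd p = 1) P = filter_mset (\<lambda>p. snd p = 2) P"
    using assms(2) by (rule split12)
  have eqP: "filter_mset (\<lambda>p. snd p = 1) P + filter_mset (\<lambda>p. snd p = 2) P = P"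
    using multiset_partition[of P "\<lambda>p. snd p = 1", symmetric] unfolding e3 .
  have "image_mset fst P = A + M" unfolding A_def M_def image_mset_union[symmetric] eqP
    by (rule refl)
  moreover have "\<Sum>(H A) = sum_mset A" using GH[OF Aodd] sum_G[OF finite_H, of A] by simp
  ultimately show "\<Sum>(fst (gm P)) + sum_mset (snd (gm P)) = sum_mset (image_mset fst P)"
    unfolding g by simp
  show "finite (fst (gm P))" unfolding g using finite_H by simp
  show "\<forall>x\<in>fst (gm P). x > 0" unfolding g using H_pos by simp
  show "\<exists>p. p \<in># P \<and> snd p = 2 \<and> x = fst p" if "x \<in># snd (gm P)" for x
    using that unfolding g M_def by auto
qed

theorem proposition2p5:
  fixes r n :: nat
  assumes "even r" and "r \<ge> 2"
  shows "card {(L, M) \<in> overpartitions n. \<forall>x\<in>#M. odd x \<and> x > r}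
       = card {P \<in> coloured_partitions n.
                 \<forall>p\<in>#P. odd (fst p) \<and> (snd p = 1 \<or> (snd p = 2 \<and> fst p > r))}"
proof -
  define S where "S = {(L, M) \<in> overpartitions n. \<forall>x\<in>#M. odd x \<and> x > r}"
  define T where "T = {P \<in> coloured_partitions n.
                 \<forall>p\<in>#P. odd (fst p) \<and> (snd p = 1 \<or> (snd p = 2 \<and> fst p > r))}"
  have Tprops: "\<forall>p\<in>#P. odd (fst p)" "\<forall>p\<in>#P. snd p = (1::nat) \<or> snd p = 2"
    "\<forall>p\<in>#P. snd p = 2 \<longrightarrow> fst p > r"
    "sum_mset (image_mset fst P) = n" if "P \<in> T" for P
    using that unfolding T_def coloured_partitions_def by auto
  have "bij_betw fm S T"
  proof (rule bij_betw_byWitness[where f'=gm])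
    show "\<forall>a\<in>S. gm (fm a) = a"
    proof
      fix a assume "a \<in> S"
      then obtain L M where a: "a = (L, M)" "finite L" "\<forall>x\<in>L. x > 0"
        unfolding S_def overpartitions_def by blast
      then show "gm (fm a) = a" using part1 by simp
    qed
    show "\<forall>P\<in>T. fm (gm P) = P"
    proof
      fix P assume P: "P \<in> T"
      show "fm (gm P) = P" using part2 Tprops(1,2)[OF P] by blast
    qed
    show "fm ` S \<subseteq> T"
    proof
      fix P assume "P \<in> fm ` S"
      then obtain L M where LM: "(L, M) \<in> S" "P = fm (L, M)" by auto
      then have L: "finite L" "\<forall>x\<in>L. x > 0" and M: "\<forall>x\<in>#M. odd x \<and> x > r"
        and s: "\<Sum>L + sum_mset M = n"
        unfolding S_def overpartitions_def by blast+
      note p = part3[OF L M]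
      have "(\<forall>p\<in>#P. 0 < fst p) \<and> sum_mset (image_mset fst P) = n"
        using p s unfolding LM(2) by blast
      moreover have "\<forall>p\<in>#P. odd (fst p) \<and> (snd p = 1 \<or> (snd p = 2 \<and> fst p > r))"
        using p unfolding LM(2) by blast
      ultimately show "P \<in> T" unfolding T_def coloured_partitions_def by blast
    qed
    show "gm ` T \<subseteq> S"
    proof
      fix a assume "a \<in> gm ` T"
      then obtain P where P: "P \<in> T" "a = gm P" by blast
      note q = part4[OF Tprops(1,2)[OF P(1)]]
      have M: "\<forall>x\<in>#snd (gm P). odd x \<and> x > r"
      proof
        fix x assume "x \<in># snd (gm P)"
        then obtain p where "p \<in># P" "snd p = 2" "x = fst p" using q(4) by blast
        then show "odd x \<and> x > r" using Tprops(1,3)[OF P(1)] by blast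
      qed
      have M0: "\<forall>x\<in>#snd (gm P). x > 0" using M by (rule pos_of_odd)
      obtain L' M' where gP: "gm P = (L', M')" by fastforce
      have "finite L' \<and> (\<forall>x\<in>L'. 0 < x) \<and> (\<forall>x\<in>#M'. 0 < x) \<and> \<Sum>L' + sum_mset M' = n"
        using q(1-3) Tprops(4)[OF P(1)] M0 unfolding gP by simp
      moreover have "\<forall>x\<in>#M'. odd x \<and> x > r" using M unfolding gP by simp
      ultimately show "a \<in> S" unfolding S_def overpartitions_def P(2) gP by blast
    qed
  qed
  then show ?thesis unfolding S_def T_def by (rule bij_betw_same_card)
qed

end
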